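(* Let $q$ be even, $G=\mathrm{SO}_{2m+1}(q)\cong\mathrm{Sp}_{2m}(q)$ acting on $V$ with nonsingular quadratic form $Q$, and let $g\in G$ be semisimple with $\dim C_V(g)\geq 2$. Then $g$ stabilizes a nondegenerate hyperplane of plus type and a nondegenerate hyperplane of minus type.
   Context: $V$ is a $(2m+1)$-dimensional $\mathbb F_q$-space and $Q$ is nonsingular, i.e. no nonzero vector of the radical $V^\perp$ of the associated bilinear form is singular; $V^\perp$ is $1$-dimensional and $G$ (the isometry group of $Q$) acts trivially on it. A nondegenerate hyperplane is a complement $W$ of $V^\perp$; $Q|_W$ is then nondegenerate and $W$ has a type (plus or minus, according to its Witt index). Stabilizers of nondegenerate hyperplanes of type $\pm$ correspond to the subgroups $\mathrm{SO}^{\pm}_{2m}(q)<\mathrm{Sp}_{2m}(q)$. *)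

theory Defs
  imports "HOL-Analysis.Analysis" "HOL-Computational_Algebra.Polynomial"
    "HOL-Computational_Algebra.Squarefree"
begin

text \<open>Vectors of V are elements of 'a^'n ('a a finite field, 'n a finite index type);
  the group elements are matrices acting by (*v).\<close>

definition polar_form :: "('a::field^'n \<Rightarrow> 'a) \<Rightarrow> 'a^'n \<Rightarrow> 'a^'n \<Rightarrow> 'a" where
  "polar_form Q u v = Q (u + v) - Q u - Q v"

definition quadratic_form :: "('a::field^'n \<Rightarrow> 'a) \<Rightarrow> bool" where
  "quadratic_form Q \<longleftrightarrow>
     (\<forall>c v. Q (c *s v) = c^2 * Q v) \<and>
     (\<forall>u v w. polar_form Q (u + v) w = polar_form Q u w + polar_form Q v w) \<and>
     (\<forall>c u w. polar_form Q (c *s u) w = c * polar_form Q u w)"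

text \<open>Radical V-perp of the associated bilinear form.\<close>
definition radical :: "('a::field^'n \<Rightarrow> 'a) \<Rightarrow> ('a^'n) set" where
  "radical Q = {v. \<forall>u. polar_form Q v u = 0}"

text \<open>Nonsingular: no nonzero vector of the radical is singular.\<close>
definition nonsingular_qf :: "('a::field^'n \<Rightarrow> 'a) \<Rightarrow> bool" where
  "nonsingular_qf Q \<longleftrightarrow> (\<forall>v\<in>radical Q. v \<noteq> 0 \<longrightarrow> Q v \<noteq> 0)"

text \<open>Isometry group of Q (in characteristic 2 and odd dimension this is SO(Q)).\<close>
definition isometry_group :: "('a::field^'n \<Rightarrow> 'a) \<Rightarrow> ('a^'n^'n) set" where
  "isometry_group Q = {g. invertible g \<and> (\<forall>v. Q (g *v v) = Q v)}"

text \<open>Evaluation of a polynomial at a matrix, applied to a vector.\<close>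
definition poly_mat_apply :: "'a::field poly \<Rightarrow> 'a^'n^'n \<Rightarrow> 'a^'n \<Rightarrow> 'a^'n" where
  "poly_mat_apply p g v = (\<Sum>i\<le>degree p. coeff p i *s (((*v) g) ^^ i) v)"

text \<open>Semisimple: the minimal polynomial has no repeated factors, i.e. g is
  annihilated by a nonzero squarefree polynomial (over a perfect field this is
  separability, i.e. diagonalisability over the algebraic closure).\<close>
definition semisimple :: "'a::field^'n^'n \<Rightarrow> bool" where
  "semisimple g \<longleftrightarrow> (\<exists>p. p \<noteq> 0 \<and> squarefree p \<and> (\<forall>v. poly_mat_apply p g v = 0))"

text \<open>Fixed space C_V(g).\<close>
definition fixed_space :: "'a::field^'n^'n \<Rightarrow> ('a^'n) set" where
  "fixed_space g = {v. g *v v = v}"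

text \<open>Nondegenerate hyperplane: a (subspace) complement of the radical.\<close>
definition nondeg_hyperplane :: "('a::field^'n \<Rightarrow> 'a) \<Rightarrow> ('a^'n) set \<Rightarrow> bool" where
  "nondeg_hyperplane Q W \<longleftrightarrow> vec.subspace W \<and> W \<inter> radical Q = {0} \<and>
     {w + r | w r. w \<in> W \<and> r \<in> radical Q} = UNIV"

definition totally_singular :: "('a::field^'n \<Rightarrow> 'a) \<Rightarrow> ('a^'n) set \<Rightarrow> bool" where
  "totally_singular Q U \<longleftrightarrow> vec.subspace U \<and> (\<forall>u\<in>U. Q u = 0)"

text \<open>Witt index of Q restricted to W: maximal dimension of a totally singular subspace of W.\<close>
definition witt_index :: "('a::field^'n \<Rightarrow> 'a) \<Rightarrow> ('a^'n) set \<Rightarrow> nat" where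
  "witt_index Q W = Max {vec.dim U | U. U \<subseteq> W \<and> totally_singular Q U}"

definition plus_type :: "('a::field^'n \<Rightarrow> 'a) \<Rightarrow> ('a^'n) set \<Rightarrow> bool" where
  "plus_type Q W \<longleftrightarrow> 2 * witt_index Q W = vec.dim W"

definition minus_type :: "('a::field^'n \<Rightarrow> 'a) \<Rightarrow> ('a^'n) set \<Rightarrow> bool" where
  "minus_type Q W \<longleftrightarrow> 2 * witt_index Q W + 2 = vec.dim W"

end

theory Submission
  imports Defs
begin

(* ---- from B ---- *)
lemma invol_even:
  assumes "finite A" "\<And>x. x \<in> A \<Longrightarrow> s x \<in> A" "\<And>x. x \<in> A \<Longrightarrow> s (s x) = x"
    "\<And>x. x \<in> A \<Longrightarrow> s x \<noteq> x"
  shows "even (card A)"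
  using assms
proof (induction "card A" arbitrary: A rule: less_induct)
  case less
  note fin = less(2) and cl = less(3) and inv = less(4) and nf = less(5)
  show ?case
  proof (cases "A = {}")
    case True then show ?thesis by simp
  next
    case False
    then obtain x where x: "x \<in> A" by blast
    let ?A = "A - {x, s x}"
    have sx: "x \<noteq> s x" using nf[OF x] by simp
    have sub: "{x, s x} \<subseteq> A" using x cl[OF x] by simp
    have c2: "card {x, s x} = 2" using sx by simp
    have c: "card ?A = card A - 2" using card_Diff_subset[OF _ sub] c2 by simp
    have "card {x, s x} \<le> card A" using card_mono[OF fin sub] .
    then have ge: "card A \<ge> 2" using c2 by simp
    have "even (card ?A)"
    proof (rule less(1))
      show "card ?A < card A" using c ge by simp
      show "finite ?A" using fin by simp
      fix y assume y: "y \<in> ?A"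
      then have yA: "y \<in> A" and yx: "y \<noteq> x" and ysx: "y \<noteq> s x" by auto
      have "s y \<noteq> x" using inv[OF yA] ysx by auto
      moreover have "s y \<noteq> s x" using inv[OF yA] inv[OF x] yx by metis
      ultimately show "s y \<in> ?A" using cl[OF yA] by simp
      show "s (s y) = y" using inv[OF yA] .
      show "s y \<noteq> y" using nf[OF yA] .
    qed
    then show ?thesis using c ge
      by (metis add_diff_inverse_nat even_add even_numeral not_le)
  qed
qed

lemma char2:
  assumes "even CARD('a::{field,finite})"
  shows "(2::'a) = 0"
proof (rule ccontr)
  assume h: "(2::'a) \<noteq> 0"
  let ?A = "UNIV - {0::'a}"
  have nf: "- x \<noteq> x" if "x \<noteq> 0" for x :: 'a
  proof
    assume "- x = x"
    then have "2 * x = 0" by (metis add.inverse_inverse mult_2 neg_eq_iff_add_eq_0)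
    then show False using h that by simp
  qed
  have "even (card ?A)"
    by (rule invol_even[where s=uminus]) (use nf in auto)
  moreover have "card ?A = CARD('a) - 1" by (simp add: card_Diff_subset)
  moreover have "CARD('a) \<ge> 1" by (simp add: Suc_leI)
  ultimately show False using assms
    by (metis One_nat_def Suc_pred even_Suc le_simps(3) zero_less_one)
qed

(* ---- from C ---- *)
locale qfc =
  fixes Q :: "'a::{field,finite}^'n \<Rightarrow> 'a"
  assumes qf: "quadratic_form Q" and two: "(2::'a) = 0"
begin

abbreviation "B \<equiv> polar_form Q"

lemma Qsm: "Q (c *s v) = c^2 * Q v" using qf unfolding quadratic_form_def by blast
lemma Badd1: "B (u + v) w = B u w + B v w" using qf unfolding quadratic_form_def by blast
lemma Bsm1: "B (c *s u) w = c * B u w" using qf unfolding quadratic_form_def by blast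
lemma Bsym: "B u v = B v u" unfolding polar_form_def by (simp add: add.commute)
lemma Badd2: "B w (u + v) = B w u + B w v" using Badd1 Bsym by metis
lemma Bsm2: "B w (c *s u) = c * B w u" using Bsm1 Bsym by metis
lemma Q0[simp]: "Q 0 = 0" using Qsm[of 0 0] by simp
lemma Qadd: "Q (u + v) = Q u + Q v + B u v" unfolding polar_form_def by simp
lemma B0[simp]: "B 0 v = 0" "B v 0 = 0" unfolding polar_form_def by simp_all

lemma neg_sc[simp]: "- (x::'a) = x"
proof -
  have "x + x = 0" using two by (metis mult_2 mult_zero_left)
  then show ?thesis by (metis add.inverse_unique)
qed
lemma minus_sc[simp]: "(x::'a) - y = x + y" by (metis diff_conv_add_uminus neg_sc)
lemma add_self_sc[simp]: "(x::'a) + x = 0" by (metis minus_sc diff_self)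
lemma neg_v[simp]: "- (v::'a^'n) = v" by (simp add: vec_eq_iff)
lemma minus_v[simp]: "(u::'a^'n) - v = u + v" by (metis diff_conv_add_uminus neg_v)
lemma add_self_v[simp]: "(v::'a^'n) + v = 0" by (metis minus_v diff_self)

lemma two_sc[simp]: "2 * (x::'a) = 0" using two by simp
lemma add_eq0_sc[simp]: "((x::'a) + y = 0) = (x = y)"
  by (metis add_self_sc add.assoc add.right_neutral add.commute)
lemma add_eq0_v[simp]: "((u::'a^'n) + v = 0) = (u = v)"
  by (metis add_self_v add.assoc add.right_neutral add.commute)
lemma two_sc2[simp]: "(x::'a) * 2 = 0" using two by simp
lemma two_v[simp]: "2 * (v::'a^'n) = 0"
  by (simp add: vec_eq_iff numeral_2_eq_2)

lemma Bself[simp]: "B v v = 0"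
proof -
  have "Q (v + v) = 0" by simp
  then show ?thesis unfolding polar_form_def by simp
qed

lemma Bsimps[simp]: "B (u + v) w = B u w + B v w" "B w (u + v) = B w u + B w v"
  "B (c *s u) w = c * B u w" "B w (c *s u) = c * B w u"
  using Badd1 Badd2 Bsm1 Bsm2 by auto

lemma Qsimps[simp]: "Q (u + v) = Q u + Q v + B u v" "Q (c *s v) = c^2 * Q v"
  using Qadd Qsm by auto

lemma sq_add: "((x::'a) + y)^2 = x^2 + y^2"
  by (simp add: power2_eq_square algebra_simps two)

lemma sq_inj: "(x::'a)^2 = y^2 \<Longrightarrow> x = y"
proof -
  assume "x^2 = y^2"
  then have "(x + y)^2 = 0" by (simp add: sq_add)
  then have "x + y = 0" by simp
  then show "x = y" by (metis add_self_sc add_left_imp_eq add.commute)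
qed

lemma sq_surj: "\<exists>y. y^2 = (x::'a)"
proof -
  have "inj (\<lambda>y::'a. y^2)" by (auto intro: injI sq_inj)
  then have "surj (\<lambda>y::'a. y^2)" using finite_UNIV_inj_surj[of "\<lambda>y::'a. y^2"] by simp
  then obtain y where "x = y^2" unfolding surj_def by blast
  then show ?thesis by blast
qed

lemma not_AS: "\<exists>c::'a. \<forall>t. t^2 + t \<noteq> c"
proof (rule ccontr)
  assume "\<not> ?thesis"
  then have all: "\<forall>c::'a. \<exists>t. t^2 + t = c" by blast
  have "surj (\<lambda>t::'a. t^2 + t)" unfolding surj_def
  proof
    fix y :: 'a
    obtain t where "t^2 + t = y" using all by blast
    then show "\<exists>x. y = x^2 + x" by metis
  qed
  then have "inj (\<lambda>t::'a. t^2 + t)" using finite_UNIV_surj_inj[of "\<lambda>t::'a. t^2 + t"] by simp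
  moreover have "(0::'a)^2 + 0 = 1^2 + 1" by simp
  ultimately have "(0::'a) = 1" unfolding inj_def by blast
  then show False by simp
qed

end

(* ---- from D ---- *)
definition hsum :: "'a::field^'n \<Rightarrow> 'a^'n \<Rightarrow> ('a^'n) set \<Rightarrow> ('a^'n) set" where
  "hsum e f X = {a *s e + b *s f + x | a b x. x \<in> X}"

lemma hsum_span:
  assumes X: "vec.subspace X"
  shows "hsum e f X = vec.span (insert e (insert f X))"
proof -
  have sX: "vec.span X = X" using X by (simp add: vec.span_eq_iff)
  show ?thesis
  proof (intro set_eqI iffI)
    fix y assume "y \<in> hsum e f X"
    then obtain a b x where y: "y = a *s e + b *s f + x" "x \<in> X" unfolding hsum_def by blast
    show "y \<in> vec.span (insert e (insert f X))" unfolding y(1)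
      by (intro vec.span_add vec.span_scale) (auto intro: vec.span_base simp: y(2))
  next
    fix y assume "y \<in> vec.span (insert e (insert f X))"
    then obtain a where "y - a *s e \<in> vec.span (insert f X)" unfolding vec.span_insert by blast
    then obtain b where "y - a *s e - b *s f \<in> vec.span X" unfolding vec.span_insert by blast
    then have "y - a *s e - b *s f \<in> X" using sX by simp
    moreover have "y = a *s e + b *s f + (y - a *s e - b *s f)" by simp
    ultimately show "y \<in> hsum e f X" unfolding hsum_def by blast
  qed
qed

context qfc begin

definition nondeg :: "('a^'n) set \<Rightarrow> bool" where
  "nondeg S \<longleftrightarrow> (\<forall>x\<in>S. (\<forall>y\<in>S. B x y = 0) \<longrightarrow> x = 0)"

definition ortho2 :: "('a^'n) set \<Rightarrow> 'a^'n \<Rightarrow> 'a^'n \<Rightarrow> ('a^'n) set" where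
  "ortho2 S s t = {x \<in> S. B x s = 0 \<and> B x t = 0}"

lemma ortho2_subspace: "vec.subspace S \<Longrightarrow> vec.subspace (ortho2 S s t)"
  unfolding ortho2_def vec.subspace_def by auto

lemma hsum_dim:
  assumes X: "vec.subspace X" and ef: "B e f = 1" and orth: "\<And>x. x \<in> X \<Longrightarrow> B x e = 0 \<and> B x f = 0"
  shows "vec.dim (hsum e f X) = vec.dim X + 2" "vec.subspace (hsum e f X)"
proof -
  have sX: "vec.span X = X" using X by (simp add: vec.span_eq_iff)
  have fX: "f \<notin> vec.span X"
  proof
    assume "f \<in> vec.span X"
    then have "f \<in> X" using sX by simp
    then show False using orth[of f] ef by (simp add: Bsym)
  qed
  have eX: "e \<notin> vec.span (insert f X)"
  proof
    assume "e \<in> vec.span (insert f X)"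
    then obtain k where "e - k *s f \<in> X" unfolding vec.span_insert sX by blast
    then have "B (e + k *s f) f = 0" using orth[of "e + k *s f"] by simp
    then show False using ef by simp
  qed
  show "vec.dim (hsum e f X) = vec.dim X + 2"
    unfolding hsum_span[OF X] vec.dim_span vec.dim_insert using fX eX by simp
  show "vec.subspace (hsum e f X)" unfolding hsum_span[OF X] by simp
qed

lemma split_decomp:
  assumes S: "vec.subspace S" and s: "s \<in> S" and t: "t \<in> S" and st: "B s t = 1"
  shows "S = hsum s t (ortho2 S s t)"
proof (intro set_eqI iffI)
  fix x assume x: "x \<in> S"
  let ?x' = "x + B x t *s s + B x s *s t"
  have "?x' \<in> S" using S s t x by (simp add: vec.subspace_add vec.subspace_scale)
  moreover have "B ?x' s = 0" "B ?x' t = 0" using st by (simp_all add: Bsym[of t s])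
  ultimately have "?x' \<in> ortho2 S s t" unfolding ortho2_def by simp
  moreover have "x = B x t *s s + B x s *s t + ?x'"
    by (simp add: algebra_simps)
  ultimately show "x \<in> hsum s t (ortho2 S s t)" unfolding hsum_def by blast
next
  fix x assume "x \<in> hsum s t (ortho2 S s t)"
  then show "x \<in> S" unfolding hsum_def ortho2_def using S s t
    by (auto intro!: vec.subspace_add vec.subspace_scale)
qed

lemma split_dim:
  assumes S: "vec.subspace S" and s: "s \<in> S" and t: "t \<in> S" and st: "B s t = 1"
  shows "vec.dim S = vec.dim (ortho2 S s t) + 2"
proof -
  have "vec.dim (hsum s t (ortho2 S s t)) = vec.dim (ortho2 S s t) + 2"
    by (rule hsum_dim(1)[OF ortho2_subspace[OF S] st]) (simp add: ortho2_def)
  then show ?thesis using split_decomp[OF assms] by simp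
qed

lemma split_nondeg:
  assumes S: "vec.subspace S" and s: "s \<in> S" and t: "t \<in> S" and st: "B s t = 1"
    and nd: "nondeg S"
  shows "nondeg (ortho2 S s t)"
  unfolding nondeg_def
proof (intro ballI impI)
  fix x assume x: "x \<in> ortho2 S s t" and h: "\<forall>y\<in>ortho2 S s t. B x y = 0"
  have "B x y = 0" if y: "y \<in> S" for y
  proof -
    obtain a b z where yz: "y = a *s s + b *s t + z" "z \<in> ortho2 S s t"
      using split_decomp[OF S s t st] y unfolding hsum_def by blast
    show ?thesis using x h yz unfolding ortho2_def by (simp add: Bsym[of x])
  qed
  then show "x = 0" using nd x unfolding nondeg_def ortho2_def by blast
qed

end

(* ---- from E ---- *)
context qfc begin

lemma nondeg_even:
  assumes "vec.subspace S" "nondeg S"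
  shows "even (vec.dim S)"
  using assms
proof (induction "vec.dim S" arbitrary: S rule: less_induct)
  case less
  note S = less(2) and nd = less(3)
  show ?case
  proof (cases "S \<subseteq> {0}")
    case True then have "vec.dim S = 0" by (simp only: vec.dim_eq_0)
    then show ?thesis by (simp only: even_zero)
  next
    case False
    then obtain s where s: "s \<in> S" "s \<noteq> 0" by blast
    then obtain t where t: "t \<in> S" "B s t \<noteq> 0" using nd unfolding nondeg_def by blast
    let ?t = "inverse (B s t) *s t"
    have t': "?t \<in> S" using S t by (simp add: vec.subspace_scale)
    have st: "B s ?t = 1" using t by simp
    have d: "vec.dim S = vec.dim (ortho2 S s ?t) + 2" using split_dim[OF S s(1) t' st] .
    have "even (vec.dim (ortho2 S s ?t))"
      by (rule less(1)) (use d ortho2_subspace[OF S] split_nondeg[OF S s(1) t' st nd] in auto)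
    then show ?thesis using d by simp
  qed
qed

lemma TS_zero: "totally_singular Q {0}"
  unfolding totally_singular_def by (simp add: vec.subspace_def)

lemma witt_set_finite: "finite {vec.dim U | U. U \<subseteq> W \<and> totally_singular Q U}"
proof -
  have "{vec.dim U | U. U \<subseteq> W \<and> totally_singular Q U} \<subseteq> {..vec.dim (UNIV :: ('a^'n) set)}"
  proof
    fix d assume "d \<in> {vec.dim U | U. U \<subseteq> W \<and> totally_singular Q U}"
    then obtain U0 :: "('a^'n) set" where "d = vec.dim U0" by blast
    moreover have "vec.dim U0 \<le> vec.dim (UNIV :: ('a^'n) set)" by (rule vec.dim_subset) simp
    ultimately show "d \<in> {..vec.dim (UNIV :: ('a^'n) set)}" by simp
  qed
  then show ?thesis using finite_subset by blast
qed

lemma witt_ge: "U \<subseteq> W \<Longrightarrow> totally_singular Q U \<Longrightarrow> vec.dim U \<le> witt_index Q W"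
  unfolding witt_index_def by (rule Max_ge[OF witt_set_finite]) blast

lemma witt_obtain:
  assumes "vec.subspace W"
  obtains U where "U \<subseteq> W" "totally_singular Q U" "vec.dim U = witt_index Q W"
proof -
  have "{0} \<subseteq> W" using assms by (simp add: vec.subspace_0)
  then have ne: "{vec.dim U | U. U \<subseteq> W \<and> totally_singular Q U} \<noteq> {}" using TS_zero by blast
  have "witt_index Q W \<in> {vec.dim U | U. U \<subseteq> W \<and> totally_singular Q U}"
    unfolding witt_index_def by (rule Max_in[OF witt_set_finite ne])
  then show ?thesis using that by auto
qed

lemma witt_eqI:
  assumes W: "vec.subspace W" and "U \<subseteq> W" "totally_singular Q U" "vec.dim U = k"
    and "\<And>U. U \<subseteq> W \<Longrightarrow> totally_singular Q U \<Longrightarrow> vec.dim U \<le> k"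
  shows "witt_index Q W = k"
proof -
  have "k \<le> witt_index Q W" using witt_ge assms by metis
  moreover obtain U' where "U' \<subseteq> W" "totally_singular Q U'" "vec.dim U' = witt_index Q W"
    using witt_obtain[OF W] by blast
  ultimately show ?thesis using assms(5) by (metis antisym)
qed

lemma kernel_dim:
  fixes \<phi> :: "'a^'n \<Rightarrow> 'a"
  assumes U: "vec.subspace U"
    and add: "\<And>x y. \<phi> (x + y) = \<phi> x + \<phi> y" and sc: "\<And>c x. \<phi> (c *s x) = c * \<phi> x"
  shows "vec.dim U \<le> vec.dim {u \<in> U. \<phi> u = 0} + 1"
proof (cases "\<exists>u0\<in>U. \<phi> u0 \<noteq> 0")
  case False
  then have "U = {u \<in> U. \<phi> u = 0}" by auto
  then show ?thesis by simp
next
  case True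
  then obtain u0 where u0: "u0 \<in> U" "\<phi> u0 \<noteq> 0" by blast
  let ?K = "{u \<in> U. \<phi> u = 0}"
  have "U \<subseteq> vec.span (insert u0 ?K)"
  proof
    fix u assume u: "u \<in> U"
    let ?k = "\<phi> u / \<phi> u0"
    have e: "u - ?k *s u0 = u + ?k *s u0" by (simp only: minus_v)
    have "\<phi> (u + ?k *s u0) = 0" using u0 by (simp add: add sc)
    moreover have "u + ?k *s u0 \<in> U" using u u0 U by (simp add: vec.subspace_add vec.subspace_scale)
    ultimately have "u - ?k *s u0 \<in> ?K" unfolding e by simp
    then have "u - ?k *s u0 \<in> vec.span ?K" by (rule vec.span_base)
    then show "u \<in> vec.span (insert u0 ?K)" unfolding vec.span_insert by blast
  qed
  then have "vec.dim U \<le> vec.dim (insert u0 ?K)" using vec.dim_mono by (metis vec.dim_span vec.span_mono vec.span_span vec.dim_subset)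
  also have "\<dots> \<le> vec.dim ?K + 1" by (simp add: vec.dim_insert)
  finally show ?thesis .
qed

end

(* ---- from F ---- *)
context qfc begin

lemma TS_B:
  assumes "totally_singular Q U" "u \<in> U" "v \<in> U" shows "B u v = 0"
proof -
  have s: "vec.subspace U" and z: "\<And>x. x \<in> U \<Longrightarrow> Q x = 0" using assms(1) unfolding totally_singular_def by auto
  have "u + v \<in> U" using s assms(2,3) by (rule vec.subspace_add)
  then have "Q (u + v) = 0" by (rule z)
  then show ?thesis using z[OF assms(2)] z[OF assms(3)] by simp
qed

lemma hyp_witt:
  assumes X: "vec.subspace X" and e: "Q e = 0" and f: "Q f = 0" and ef: "B e f = 1"
    and orth: "\<And>x. x \<in> X \<Longrightarrow> B x e = 0 \<and> B x f = 0"
  shows "witt_index Q (hsum e f X) = witt_index Q X + 1"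
proof -
  have fe: "B f e = 1" using ef by (simp add: Bsym)
  have H: "vec.subspace (hsum e f X)" using hsum_dim(2)[OF X ef orth] .
  have sX: "vec.span X = X" using X by (simp add: vec.span_eq_iff)
  obtain U where U: "U \<subseteq> X" "totally_singular Q U" "vec.dim U = witt_index Q X"
    using witt_obtain[OF X] by blast
  have sU: "vec.span U = U" using U(2) unfolding totally_singular_def by (simp add: vec.span_eq_iff)
  let ?U = "vec.span (insert e U)"
  have eU: "e \<notin> vec.span U"
  proof
    assume "e \<in> vec.span U"
    then have "e \<in> X" using sU U(1) by auto
    then show False using orth[of e] ef by simp
  qed
  have "totally_singular Q ?U"
    unfolding totally_singular_def
  proof (intro conjI ballI)
    show "vec.subspace ?U" by simp
    fix y assume "y \<in> ?U"
    then obtain k where "y - k *s e \<in> U" unfolding vec.span_insert sU by blast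
    then have y: "y + k *s e \<in> U" by simp
    have y2: "y = (y + k *s e) + k *s e" by simp
    have "Q (y + k *s e) = 0" using U(2) y unfolding totally_singular_def by blast
    moreover have "B (y + k *s e) e = 0" using orth y U(1) by blast
    ultimately show "Q y = 0" by (subst y2) (simp add: e)
  qed
  moreover have "?U \<subseteq> hsum e f X"
  proof -
    have "insert e U \<subseteq> hsum e f X" unfolding hsum_def
    proof
      fix y assume "y \<in> insert e U"
      then show "y \<in> {a *s e + b *s f + x |a b x. x \<in> X}"
      proof
        assume "y = e" then have "y = 1 *s e + 0 *s f + 0" by simp
        then show ?thesis using X vec.subspace_0 by blast
      next
        assume "y \<in> U" then have "y = 0 *s e + 0 *s f + y" by simp
        then show ?thesis using \<open>y \<in> U\<close> U(1) by blast
      qed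
    qed
    then show ?thesis using vec.span_minimal H unfolding hsum_def by blast
  qed
  moreover have "vec.dim ?U = witt_index Q X + 1" using eU U(3) by (simp add: vec.dim_insert)
  moreover have "vec.dim V \<le> witt_index Q X + 1"
    if V: "V \<subseteq> hsum e f X" "totally_singular Q V" for V
  proof -
    define \<pi> where "\<pi> w = w + B w f *s e + B w e *s f" for w
    have lin: "Vector_Spaces.linear (*s) (*s) \<pi>"
      unfolding Vector_Spaces.linear_iff \<pi>_def
      by (simp add: vec.vector_space_axioms vec_eq_iff algebra_simps)
    have \<pi>X: "\<pi> w \<in> X" if wH: "w \<in> hsum e f X" for w
    proof -
      obtain a b x where w: "w = a *s e + b *s f + x" "x \<in> X" using wH unfolding hsum_def by blast
      have "\<pi> w = x" using orth[OF w(2)] unfolding w \<pi>_def by (simp add: ef fe vec_eq_iff algebra_simps)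
      then show ?thesis using w(2) by simp
    qed
    have Vs: "vec.subspace V" using V(2) unfolding totally_singular_def by simp
    obtain V3 where V3: "V3 \<subseteq> V" "vec.subspace V3" "vec.dim V \<le> vec.dim V3 + 1"
      "\<And>v. v \<in> V3 \<Longrightarrow> B v e = 0" "\<And>v. v \<in> V3 \<Longrightarrow> \<pi> v = 0 \<Longrightarrow> v = 0"
    proof (cases "e \<in> V")
      case False
      let ?V3 = "{v \<in> V. B v e = 0}"
      show ?thesis
      proof (rule that[of ?V3])
        show "?V3 \<subseteq> V" by auto
        show "vec.subspace ?V3" using Vs unfolding vec.subspace_def by auto
        show "vec.dim V \<le> vec.dim ?V3 + 1" by (rule kernel_dim[OF Vs]) simp_all
        show "B v e = 0" if "v \<in> ?V3" for v using that by simp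
        fix v assume v: "v \<in> ?V3" and pv: "\<pi> v = 0"
        then have v2: "v = B v f *s e" unfolding \<pi>_def by (simp add: vec_eq_iff)
        show "v = 0"
        proof (rule ccontr)
          assume "v \<noteq> 0"
          then have c: "B v f \<noteq> 0" using v2 by (metis vector_smult_lzero)
          have "e = inverse (B v f) *s v" using c by (subst v2) simp
          then have "e \<in> V" using v Vs by (simp add: vec.subspace_scale)
          then show False using False by simp
        qed
      qed
    next
      case True
      let ?V3 = "{v \<in> V. B v f = 0}"
      show ?thesis
      proof (rule that[of ?V3])
        show "?V3 \<subseteq> V" by auto
        show "vec.subspace ?V3" using Vs unfolding vec.subspace_def by auto
        show "vec.dim V \<le> vec.dim ?V3 + 1" by (rule kernel_dim[OF Vs]) simp_all
        show "B v e = 0" if "v \<in> ?V3" for v using that True V(2) TS_B by blast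
        fix v assume v: "v \<in> ?V3" and pv: "\<pi> v = 0"
        then have "v = B v f *s e" unfolding \<pi>_def
          using TS_B[OF V(2) _ True, of v] by (simp add: vec_eq_iff)
        then show "v = 0" using v by simp
      qed
    qed
    have TS3: "totally_singular Q (\<pi> ` V3)"
      unfolding totally_singular_def
    proof (intro conjI ballI)
      show "vec.subspace (\<pi> ` V3)" by (rule vec.linear_subspace_image[OF lin V3(2)])
      fix y assume "y \<in> \<pi> ` V3"
      then obtain v where v: "v \<in> V3" "y = \<pi> v" by blast
      have "Q v = 0" using V(2) V3(1) v(1) unfolding totally_singular_def by blast
      then show "Q y = 0" using V3(4)[OF v(1)] unfolding v(2) \<pi>_def by (simp add: e f ef)
    qed
    have sub3: "\<pi> ` V3 \<subseteq> X" using \<pi>X V(1) V3(1) by blast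
    have "inj_on \<pi> V3"
      using V3(2) V3(5) vec.linear_inj_on_iff_eq_0[OF lin V3(2)] by simp
    moreover have sp3: "vec.span V3 = V3" using V3(2) by (simp add: vec.span_eq_iff)
    ultimately have inj: "inj_on \<pi> (vec.span V3)" by (simp only: sp3)
    have "vec.dim (\<pi> ` V3) = vec.dim V3" by (rule vec.dim_image_eq[OF lin inj])
    then have "vec.dim V3 \<le> witt_index Q X" using witt_ge[OF sub3 TS3] by simp
    then show ?thesis using V3(3) by simp
  qed
  ultimately show ?thesis using witt_eqI[OF H] by blast
qed

end

(* ---- from G ---- *)
context qfc begin

lemma witt_aniso:
  assumes W: "vec.subspace W" and an: "\<And>w. w \<in> W \<Longrightarrow> Q w = 0 \<Longrightarrow> w = 0"
  shows "witt_index Q W = 0"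
proof (rule witt_eqI[OF W])
  show "{0} \<subseteq> W" using W by (simp add: vec.subspace_0)
  show "totally_singular Q {0}" by (rule TS_zero)
  show "vec.dim {0::'a^'n} = 0" by simp
  fix U assume "U \<subseteq> W" "totally_singular Q U"
  then have "U \<subseteq> {0}" using an unfolding totally_singular_def by blast
  then show "vec.dim U \<le> 0" by simp
qed

lemma witt_zero: "witt_index Q {0} = 0"
  by (rule witt_aniso) (auto simp: vec.subspace_def)

lemma iso3:
  assumes Y: "vec.subspace Y" and d: "vec.dim Y \<ge> 3"
  shows "\<exists>e\<in>Y. e \<noteq> 0 \<and> Q e = 0"
proof -
  have "\<not> Y \<subseteq> {0}"
  proof
    assume "Y \<subseteq> {0}"
    then have "vec.dim Y = 0" by (simp only: vec.dim_eq_0)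
    then show False using d by linarith
  qed
  then obtain w where w: "w \<in> Y" "w \<noteq> 0" by blast
  let ?K = "{y \<in> Y. B y w = 0}"
  have "vec.dim Y \<le> vec.dim ?K + 1" by (rule kernel_dim[OF Y]) simp_all
  then have dK: "vec.dim ?K \<ge> 2" using d by simp
  have "\<not> ?K \<subseteq> vec.span {w}"
  proof
    assume "?K \<subseteq> vec.span {w}"
    then have "vec.dim ?K \<le> vec.dim (vec.span {w})" by (rule vec.dim_subset)
    also have "\<dots> \<le> 1" using vec.dim_insert[of w "{}"] by simp
    finally show False using dK by simp
  qed
  then obtain x where x: "x \<in> Y" "B x w = 0" "x \<notin> vec.span {w}" by blast
  show ?thesis
  proof (cases "Q w = 0")
    case True then show ?thesis using w by blast
  next
    case False
    obtain t where t: "t^2 = Q x / Q w" using sq_surj by blast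
    let ?e = "t *s w + x"
    have "Q ?e = 0" using t False x(2) by (simp add: Bsym[of w x])
    moreover have "?e \<in> Y" using Y w x by (simp add: vec.subspace_add vec.subspace_scale)
    moreover have "?e \<noteq> 0"
    proof
      assume "?e = 0"
      then have "t *s w = x" by (simp only: add_eq0_v)
      then have "x = t *s w" by (rule sym)
      then have "x \<in> vec.span {w}" by (simp add: vec.span_scale vec.span_base)
      then show False using x(3) by simp
    qed
    ultimately show ?thesis by blast
  qed
qed

lemma hyp_pair:
  assumes S: "vec.subspace S" and e: "e \<in> S" "Q e = 0" "e \<noteq> 0" and nd: "nondeg S"
  obtains f where "f \<in> S" "Q f = 0" "B e f = 1"
proof -
  obtain t where t: "t \<in> S" "B e t \<noteq> 0" using nd e unfolding nondeg_def by blast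
  let ?g = "inverse (B e t) *s t"
  let ?f = "?g + Q ?g *s e"
  have f0: "?g \<in> S" using t S by (simp add: vec.subspace_scale)
  have f1: "B e ?g = 1" using t by simp
  have "?f \<in> S" by (intro vec.subspace_add[OF S] vec.subspace_scale[OF S] f0(1) e(1))
  moreover have "Q ?f = 0" using f1 e by (simp only: Qsimps Bsimps Bsym[of _ e]) simp
  moreover have "B e ?f = 1" using f1 e by (simp only: Bsimps) simp
  ultimately show ?thesis using that by blast
qed

lemma hsum_assoc:
  "hsum p q (hsum e f X) = hsum e f (hsum p q X)"
proof (intro set_eqI iffI)
  fix y assume "y \<in> hsum p q (hsum e f X)"
  then obtain a b c d x where y: "y = a *s p + b *s q + (c *s e + d *s f + x)" "x \<in> X"
    unfolding hsum_def by blast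
  then have "y = c *s e + d *s f + (a *s p + b *s q + x)" by (simp add: algebra_simps)
  then show "y \<in> hsum e f (hsum p q X)" using y(2) unfolding hsum_def by blast
next
  fix y assume "y \<in> hsum e f (hsum p q X)"
  then obtain a b c d x where y: "y = a *s e + b *s f + (c *s p + d *s q + x)" "x \<in> X"
    unfolding hsum_def by blast
  then have "y = c *s p + d *s q + (a *s e + b *s f + x)" by (simp add: algebra_simps)
  then show "y \<in> hsum p q (hsum e f X)" using y(2) unfolding hsum_def by blast
qed

end

(* ---- from H ---- *)
lemma hsum2_span: "hsum e f (hsum g h {0}) = vec.span {e, f, g, h}"
proof -
  have s0: "vec.subspace {0::'a::field^'b}" by (simp add: vec.subspace_def)
  have i: "hsum g h {0} = vec.span {g, h, 0}" using hsum_span[OF s0] by simp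
  have si: "vec.subspace (hsum g h {0})" unfolding i by simp
  have o: "hsum e f (hsum g h {0}) = vec.span (insert e (insert f (hsum g h {0})))"
    using hsum_span[OF si] .
  show ?thesis unfolding o vec.span_eq
  proof
    show "insert e (insert f (hsum g h {0})) \<subseteq> vec.span {e, f, g, h}"
    proof -
      have "hsum g h {0} \<subseteq> vec.span {e, f, g, h}"
        unfolding i by (rule vec.span_minimal) (auto intro: vec.span_base simp: vec.span_zero)
      then show ?thesis by (auto intro: vec.span_base)
    qed
    show "{e, f, g, h} \<subseteq> vec.span (insert e (insert f (hsum g h {0})))"
    proof -
      have "g \<in> hsum g h {0}" "h \<in> hsum g h {0}" unfolding i by (auto intro: vec.span_base)
      then show ?thesis by (auto intro: vec.span_base)
    qed
  qed
qed

context qfc begin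

lemma absorb:
  assumes p12: "B p1 p2 = 1" and y12: "B y1 y2 = 1"
    and o: "B p1 y1 = 0" "B p1 y2 = 0" "B p2 y1 = 0" "B p2 y2 = 0"
    and q1: "Q p1 = Q y1" and q2: "Q p2 = Q y2"
  shows "witt_index Q (hsum p1 p2 (hsum y1 y2 {0})) = 2"
proof -
  have o': "B y1 p1 = 0" "B y2 p1 = 0" "B y1 p2 = 0" "B y2 p2 = 0" "B p2 p1 = 1" "B y2 y1 = 1"
    using o p12 y12 by (simp_all add: Bsym)
  define e where "e = y1 + p1"
  define f where "f = y2 + Q y2 *s e"
  define x where "x = p2 + y2"
  define g where "g = p1 + Q p1 *s x"
  have Qe: "Q e = 0" unfolding e_def using o' q1 by simp
  have Be: "B e e = 0" by simp
  have Bef: "B e f = 1" unfolding f_def e_def using o' o y12 by simp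
  have Bey2: "B e y2 = 1" unfolding e_def using o y12 by simp
  have Qf: "Q f = 0" unfolding f_def using Qe Bey2 by (simp add: Bsym[of y2 e])
  have Qx: "Q x = 0" unfolding x_def using q2 o by simp
  have Bxe: "B x e = 0" unfolding x_def e_def using o o' y12 by simp
  have Bxf: "B x f = 0" unfolding f_def using Bxe o o' y12 by (simp add: x_def)
  have Bp1x: "B p1 x = 1" unfolding x_def using o p12 by simp
  have Bxg: "B x g = 1" unfolding g_def using Bp1x by (simp add: Bsym[of x p1])
  have Qg: "Q g = 0" unfolding g_def using Qx Bp1x by simp
  have Bge: "B g e = 0" unfolding g_def using Bxe o o' by (simp add: e_def)
  have Bgf: "B g f = 0" unfolding g_def f_def using Bxe Bxf o o' Bge
    by (simp add: e_def x_def)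
  have s0: "vec.subspace {0::'a^'n}" by (simp add: vec.subspace_def)
  have X: "vec.subspace (hsum x g {0})" using hsum2_span[of x g] hsum_span[OF s0, of x g] by simp
  have w1: "witt_index Q (hsum x g {0}) = 1"
    using hyp_witt[OF s0 Qx Qg Bxg] witt_zero by simp
  have orth: "B z e = 0 \<and> B z f = 0" if zX: "z \<in> hsum x g {0}" for z
  proof -
    obtain a b where "z = a *s x + b *s g" using zX unfolding hsum_def by auto
    then show ?thesis using Bxe Bxf Bge Bgf by simp
  qed
  have w2: "witt_index Q (hsum e f (hsum x g {0})) = 2"
    using hyp_witt[OF X Qe Qf Bef orth] w1 by simp
  have "hsum p1 p2 (hsum y1 y2 {0}) = hsum e f (hsum x g {0})"
    unfolding hsum2_span vec.span_eq
  proof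
    have "p1 = g + Q p1 *s x" unfolding g_def by simp
    moreover have "g + Q p1 *s x \<in> vec.span {e, f, x, g}"
      by (intro vec.span_add vec.span_scale vec.span_base) auto
    moreover have "p2 = x + Q y2 *s e + f" unfolding x_def f_def by simp
    moreover have "x + Q y2 *s e + f \<in> vec.span {e, f, x, g}"
      by (intro vec.span_add vec.span_scale vec.span_base) auto
    moreover have "y1 = e + g + Q p1 *s x" unfolding e_def g_def by simp
    moreover have "e + g + Q p1 *s x \<in> vec.span {e, f, x, g}"
      by (intro vec.span_add vec.span_scale vec.span_base) auto
    moreover have "y2 = f + Q y2 *s e" unfolding f_def by simp
    moreover have "f + Q y2 *s e \<in> vec.span {e, f, x, g}"
      by (intro vec.span_add vec.span_scale vec.span_base) auto
    ultimately show "{p1, p2, y1, y2} \<subseteq> vec.span {e, f, x, g}" by simp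
    show "{e, f, x, g} \<subseteq> vec.span {p1, p2, y1, y2}"
    proof -
      have "y1 + p1 \<in> vec.span {p1, p2, y1, y2}"
        by (intro vec.span_add vec.span_scale vec.span_base) auto
      moreover have "y2 + Q y2 *s (y1 + p1) \<in> vec.span {p1, p2, y1, y2}"
        by (intro vec.span_add vec.span_scale vec.span_base) auto
      moreover have "p2 + y2 \<in> vec.span {p1, p2, y1, y2}"
        by (intro vec.span_add vec.span_scale vec.span_base) auto
      moreover have "p1 + Q p1 *s (p2 + y2) \<in> vec.span {p1, p2, y1, y2}"
        by (intro vec.span_add vec.span_scale vec.span_base) auto
      ultimately show ?thesis unfolding e_def f_def x_def g_def by simp
    qed
  qed
  then show ?thesis using w2 by simp
qed

lemma aniso_base:
  assumes p12: "B p1 p2 = 1" and q1: "Q p1 = 1" and q2: "Q p2 = c0"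
    and c0: "\<And>t. t^2 + t \<noteq> c0"
  shows "witt_index Q (hsum p1 p2 {0}) = 0"
proof (rule witt_aniso)
  have s0: "vec.subspace {0::'a^'n}" by (simp add: vec.subspace_def)
  show "vec.subspace (hsum p1 p2 {0})" using hsum2_span[of p1 p2] hsum_span[OF s0, of p1 p2] by simp
  fix w assume w: "w \<in> hsum p1 p2 {0}" and Qw: "Q w = 0"
  obtain a b where wab: "w = a *s p1 + b *s p2" using w unfolding hsum_def by auto
  have eq: "a^2 + a * b + b^2 * c0 = 0" using Qw p12 q1 q2 unfolding wab by (simp add: algebra_simps)
  have b0: "b = 0"
  proof (rule ccontr)
    assume b: "b \<noteq> 0"
    have "(a/b)^2 + a/b + c0 = (a^2 + a * b + b^2 * c0) / b^2" using b
      by (simp add: field_simps power2_eq_square)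
    then have "(a/b)^2 + a/b = c0" using eq by simp
    then show False using c0 by blast
  qed
  then have "a = 0" using eq by simp
  then show "w = 0" using b0 wab by simp
qed

end

(* ---- from I ---- *)
locale qfs = qfc Q for Q :: "'a::{field,finite}^'n \<Rightarrow> 'a" +
  fixes r u c :: "'a^'n"
  assumes rad: "\<And>v. polar_form Q r v = 0" and Qr: "Q r \<noteq> 0" and uc: "polar_form Q u c = 1"
begin

lemma rad2[simp]: "B r v = 0" "B v r = 0" using rad[of v] Bsym[of v r] by simp_all

lemma choose: "\<exists>a. Q (x + a *s r) = \<gamma>"
proof -
  obtain a where a: "a^2 = (\<gamma> + Q x) / Q r" using sq_surj by blast
  have "Q (x + a *s r) = Q x + (\<gamma> + Q x)" using a Qr by simp
  also have "\<dots> = \<gamma>" by (simp add: add.commute add.left_commute)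
  finally show ?thesis by blast
qed

lemma K:
  "vec.subspace Y \<Longrightarrow> nondeg Y \<Longrightarrow> vec.dim Y = 2 * k \<Longrightarrow> (\<forall>y\<in>Y. B y u = 0 \<and> B y c = 0) \<Longrightarrow>
   (\<exists>a b. witt_index Q (hsum (u + a *s r) (c + b *s r) Y) = k + 1) \<and>
   (\<exists>a b. witt_index Q (hsum (u + a *s r) (c + b *s r) Y) = k)"
proof (induction k arbitrary: Y)
  case 0
  then have Y0: "Y = {0}" using vec.subspace_0 by auto
  obtain a where a: "Q (u + a *s r) = 0" using choose by blast
  obtain b where b: "Q (c + b *s r) = 0" using choose by blast
  have s0: "vec.subspace {0::'a^'n}" by (simp add: vec.subspace_def)
  have "witt_index Q (hsum (u + a *s r) (c + b *s r) {0}) = witt_index Q {0} + 1"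
    by (rule hyp_witt[OF s0 a b]) (simp_all add: uc)
  then have P: "witt_index Q (hsum (u + a *s r) (c + b *s r) Y) = 0 + 1" using Y0 witt_zero by simp
  obtain c0 :: 'a where c0: "\<And>t. t^2 + t \<noteq> c0" using not_AS by blast
  obtain a' where a': "Q (u + a' *s r) = 1" using choose by blast
  obtain b' where b': "Q (c + b' *s r) = c0" using choose by blast
  have "witt_index Q (hsum (u + a' *s r) (c + b' *s r) {0}) = 0"
    by (rule aniso_base[OF _ a' b' c0]) (simp add: uc)
  then show ?case using P Y0 by blast
next
  case (Suc k)
  note Y = Suc.prems(1) and nd = Suc.prems(2) and dY = Suc.prems(3) and oY = Suc.prems(4)
  show ?case
  proof (cases "\<exists>e\<in>Y. e \<noteq> 0 \<and> Q e = 0")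
    case True
    then obtain e where e: "e \<in> Y" "e \<noteq> 0" "Q e = 0" by blast
    obtain f where f: "f \<in> Y" "Q f = 0" "B e f = 1" using hyp_pair[OF Y e(1,3,2) nd] by blast
    let ?Y = "ortho2 Y e f"
    have Ys: "vec.subspace ?Y" using ortho2_subspace[OF Y] .
    have Ynd: "nondeg ?Y" using split_nondeg[OF Y e(1) f(1) f(3) nd] .
    have Yd: "vec.dim ?Y = 2 * k" using split_dim[OF Y e(1) f(1) f(3)] dY by simp
    have Yo: "\<forall>y\<in>?Y. B y u = 0 \<and> B y c = 0" using oY unfolding ortho2_def by simp
    have Ydec: "Y = hsum e f ?Y" using split_decomp[OF Y e(1) f(1) f(3)] .
    have step: "witt_index Q (hsum (u + a *s r) (c + b *s r) Y)
        = witt_index Q (hsum (u + a *s r) (c + b *s r) ?Y) + 1" for a b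
    proof -
      have Xs: "vec.subspace (hsum (u + a *s r) (c + b *s r) ?Y)"
        by (rule hsum_dim(2)[OF Ys]) (use Yo in \<open>simp_all add: uc\<close>)
      have "witt_index Q (hsum e f (hsum (u + a *s r) (c + b *s r) ?Y))
          = witt_index Q (hsum (u + a *s r) (c + b *s r) ?Y) + 1"
      proof (rule hyp_witt[OF Xs e(3) f(2) f(3)])
        fix x assume "x \<in> hsum (u + a *s r) (c + b *s r) ?Y"
        then obtain \<alpha> \<beta> y where x: "x = \<alpha> *s (u + a *s r) + \<beta> *s (c + b *s r) + y" "y \<in> ?Y"
          unfolding hsum_def by blast
        have "B e u = 0" "B e c = 0" "B f u = 0" "B f c = 0" using oY e(1) f(1) by auto
        then have "B u e = 0" "B c e = 0" "B u f = 0" "B c f = 0" by (simp_all add: Bsym)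
        then show "B x e = 0 \<and> B x f = 0" using x(2) unfolding x(1) ortho2_def
          by (simp add: Bsym[of y e] Bsym[of y f])
      qed
      moreover have "hsum (u + a *s r) (c + b *s r) Y = hsum (u + a *s r) (c + b *s r) (hsum e f ?Y)"
        by (rule arg_cong[OF Ydec])
      moreover have "hsum (u + a *s r) (c + b *s r) (hsum e f ?Y) = hsum e f (hsum (u + a *s r) (c + b *s r) ?Y)"
        by (rule hsum_assoc)
      ultimately show ?thesis by simp
    qed
    obtain a b where ab: "witt_index Q (hsum (u + a *s r) (c + b *s r) ?Y) = k + 1"
      using Suc.IH[OF Ys Ynd Yd Yo] by blast
    obtain a' b' where ab': "witt_index Q (hsum (u + a' *s r) (c + b' *s r) ?Y) = k"
      using Suc.IH[OF Ys Ynd Yd Yo] by blast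
    show ?thesis using step[of a b] step[of a' b'] ab ab' by auto
  next
    case False
    then have an: "\<And>w. w \<in> Y \<Longrightarrow> Q w = 0 \<Longrightarrow> w = 0" by blast
    have "\<not> vec.dim Y \<ge> 3" using iso3[OF Y] False by blast
    then have k0: "k = 0" using dY by simp
    then have dY2: "vec.dim Y = 2" using dY by simp
    then have "\<not> Y \<subseteq> {0}"
    proof -
      assume d2: "vec.dim Y = 2"
      show "\<not> Y \<subseteq> {0}"
      proof
        assume "Y \<subseteq> {0}"
        then have "vec.dim Y = 0" by (simp only: vec.dim_eq_0)
        then show False using d2 by linarith
      qed
    qed
    then obtain y1 where y1: "y1 \<in> Y" "y1 \<noteq> 0" by blast
    obtain t where t: "t \<in> Y" "B y1 t \<noteq> 0" using nd y1 unfolding nondeg_def by blast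
    define y2 where "y2 = inverse (B y1 t) *s t"
    have y2: "y2 \<in> Y" "B y1 y2 = 1" unfolding y2_def using t Y by (simp_all add: vec.subspace_scale)
    have "vec.dim (ortho2 Y y1 y2) = 0" using split_dim[OF Y y1(1) y2] dY2 by simp
    then have "ortho2 Y y1 y2 = {0}" using vec.subspace_0[OF ortho2_subspace[OF Y]]
      by (auto simp only: vec.dim_eq_0)
    then have Yeq: "Y = hsum y1 y2 {0}" using split_decomp[OF Y y1(1) y2] by simp
    have wY: "witt_index Q Y = 0" by (rule witt_aniso[OF Y an])
    obtain a where a: "Q (u + a *s r) = 0" using choose by blast
    obtain b where b: "Q (c + b *s r) = 0" using choose by blast
    have "witt_index Q (hsum (u + a *s r) (c + b *s r) Y) = witt_index Q Y + 1"
      by (rule hyp_witt[OF Y a b]) (use oY in \<open>simp_all add: uc\<close>)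
    then have m: "witt_index Q (hsum (u + a *s r) (c + b *s r) Y) = Suc k" using wY k0 by simp
    obtain a' where a': "Q (u + a' *s r) = Q y1" using choose by blast
    obtain b' where b': "Q (c + b' *s r) = Q y2" using choose by blast
    have o: "B y1 u = 0" "B y1 c = 0" "B y2 u = 0" "B y2 c = 0" using oY y1(1) y2(1) by auto
    have "witt_index Q (hsum (u + a' *s r) (c + b' *s r) (hsum y1 y2 {0})) = 2"
      by (rule absorb[OF _ y2(2) _ _ _ _ a' b']) (use o in \<open>simp_all add: uc Bsym[of u y1] Bsym[of u y2] Bsym[of c y1] Bsym[of c y2]\<close>)
    then have p: "witt_index Q (hsum (u + a' *s r) (c + b' *s r) Y) = Suc k + 1" using Yeq k0 by simp
    show ?thesis using m p by blast
  qed
qed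

end

(* ---- from J ---- *)
abbreviation pma :: "'a::field poly \<Rightarrow> 'a^'n^'n \<Rightarrow> 'a^'n \<Rightarrow> 'a^'n" where
  "pma \<equiv> poly_mat_apply"

context fixes g :: "'a::field^'n^'n" begin

lemma Lpow_add: "(((*v) g) ^^ i) (x + y) = (((*v) g) ^^ i) x + (((*v) g) ^^ i) y"
  by (induction i) (simp_all add: matrix_vector_right_distrib)

lemma Lpow_scale: "(((*v) g) ^^ i) (c *s x) = c *s (((*v) g) ^^ i) x"
  by (induction i) (simp_all add: vec.scale)

lemma Lpow_zero: "(((*v) g) ^^ i) 0 = 0"
  by (induction i) simp_all

lemma pma_N: "degree p \<le> N \<Longrightarrow> pma p g v = (\<Sum>i\<le>N. coeff p i *s (((*v) g) ^^ i) v)"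
  unfolding poly_mat_apply_def
  by (rule sum.mono_neutral_left) (auto simp: coeff_eq_0)

lemma pma_add: "pma (p + q) g v = pma p g v + pma q g v"
proof -
  let ?N = "max (degree p) (degree q)"
  have "degree (p + q) \<le> ?N" by (rule degree_add_le) auto
  then show ?thesis
    by (simp add: pma_N[of "p+q" ?N] pma_N[of p ?N] pma_N[of q ?N] vector_sadd_rdistrib sum.distrib)
qed

lemma pma_smult: "pma (smult a p) g v = a *s pma p g v"
  unfolding pma_N[of "smult a p" "degree p" v, OF degree_smult_le] pma_N[of p "degree p", OF order_refl]
  by (simp add: vec.scale_sum_right)

lemma pma_const: "pma [:a:] g v = a *s v"
  unfolding poly_mat_apply_def by simp

lemma pma_pCons: "pma (pCons a p) g v = a *s v + pma p g (g *v v)"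
proof -
  let ?N = "Suc (degree p)"
  have "pma (pCons a p) g v = (\<Sum>i\<le>?N. coeff (pCons a p) i *s (((*v) g) ^^ i) v)"
    by (rule pma_N) (simp add: degree_pCons_le)
  also have "\<dots> = a *s v + (\<Sum>i\<le>degree p. coeff p i *s (((*v) g) ^^ Suc i) v)"
    by (subst sum.atMost_Suc_shift) simp
  also have "\<dots> = a *s v + pma p g (g *v v)"
    unfolding poly_mat_apply_def by (simp add: funpow_Suc_right del: funpow.simps)
  finally show ?thesis .
qed

lemma pma_vadd: "pma p g (x + y) = pma p g x + pma p g y"
  unfolding poly_mat_apply_def by (simp add: Lpow_add vector_add_ldistrib sum.distrib)

lemma pma_vscale: "pma p g (c *s x) = c *s pma p g x"
  unfolding poly_mat_apply_def by (simp add: Lpow_scale vec.scale_sum_right algebra_simps)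

lemma pma_vzero: "pma p g 0 = 0"
  unfolding poly_mat_apply_def by (simp add: Lpow_zero)

lemma pma_zero: "pma 0 g v = 0"
  unfolding poly_mat_apply_def by simp

lemma pma_comm: "pma p g (g *v v) = g *v pma p g v"
proof -
  have "(((*v) g) ^^ i) (g *v v) = g *v ((((*v) g) ^^ i) v)" for i
    by (induction i) simp_all
  then show ?thesis unfolding poly_mat_apply_def
    by (simp add: vec.sum vec.scale)
qed

lemma pma_mult: "pma (p * q) g v = pma p g (pma q g v)"
proof (induction p arbitrary: v rule: pCons_induct)
  case 0 then show ?case by (simp add: pma_zero)
next
  case (pCons a p)
  have "pma (pCons a p * q) g v = pma (smult a q + pCons 0 (p * q)) g v" by simp
  also have "\<dots> = a *s pma q g v + pma (p * q) g (g *v v)"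
    by (simp add: pma_add pma_smult pma_pCons)
  also have "\<dots> = a *s pma q g v + pma p g (g *v pma q g v)"
    using pCons.IH by (simp add: pma_comm)
  also have "\<dots> = pma (pCons a p) g (pma q g v)" by (simp add: pma_pCons)
  finally show ?case .
qed

lemma pma_one: "pma 1 g v = v"
  using pma_const[of 1 v] by (simp add: one_pCons)

lemma pma_lin: "pma [:-1, 1:] g v = g *v v - v"
  by (simp add: pma_pCons pma_zero)

end

lemma lin_bezout:
  fixes h :: "'a::field poly"
  assumes "\<not> [:-1, 1:] dvd h"
  shows "\<exists>a b. a * [:-1, 1:] + b * h = 1"
proof -
  define c1 where "c1 = poly h 1"
  define sd where "sd = synthetic_div h 1"
  have h1: "c1 \<noteq> 0" using assms by (simp add: poly_eq_0_iff_dvd c1_def)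
  have hh0: "[:-1, 1:] * sd + [:c1:] = h" unfolding c1_def sd_def by (rule synthetic_div_correct')
  have hh: "h = [:-1, 1:] * sd + [:c1:]" using hh0 by (rule sym)
  define a where "a = - ([:inverse c1:] * sd)"
  have "a * [:-1, 1:] + [:inverse c1:] * h = [:inverse c1:] * [:c1:]"
    unfolding a_def by (subst hh) (simp add: algebra_simps)
  also have "\<dots> = 1" using h1 by (simp add: one_pCons)
  finally show ?thesis by blast
qed

lemma ss_bezout:
  fixes p :: "'a::field poly"
  assumes p: "p \<noteq> 0" "squarefree p"
  shows "\<exists>a b h. a * [:-1, 1:] + b * h = 1 \<and> p dvd [:-1, 1:] * h"
proof -
  let ?e = "[:-1, 1:] :: 'a poly"
  show ?thesis
  proof (cases "?e dvd p")
    case True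
    then obtain h where h: "p = ?e * h" by blast
    have "\<not> ?e dvd h"
    proof
      assume "?e dvd h"
      then obtain k where k: "h = ?e * k" by blast
      have "p = ?e^2 * k" unfolding h k by (simp only: power2_eq_square mult.assoc)
      then have "?e^2 dvd p" unfolding dvd_def by blast
      then have "is_unit ?e" using p(2) unfolding squarefree_def by blast
      then show False by (simp add: is_unit_iff_degree)
    qed
    then obtain a b where "a * ?e + b * h = 1" using lin_bezout by blast
    moreover have "p dvd ?e * h" using h by simp
    ultimately show ?thesis by blast
  next
    case False
    then obtain a b where "a * ?e + b * p = 1" using lin_bezout by blast
    moreover have "p dvd ?e * p" by (rule dvd_triv_right)
    ultimately show ?thesis by blast
  qed
qed

lemma ss_consequences:
  fixes g :: "'a::field^'n^'n"
  assumes ss: "semisimple g"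
  shows "\<And>v. \<exists>c w. v = c + (g *v w - w) \<and> g *v c = c"
    and "\<And>w. g *v (g *v w - w) - (g *v w - w) = 0 \<Longrightarrow> g *v w - w = 0"
proof -
  obtain p where p: "p \<noteq> 0" "squarefree p" "\<And>v. pma p g v = 0"
    using ss unfolding semisimple_def by blast
  obtain a b h where abh: "a * [:-1, 1:] + b * h = 1" and d: "p dvd [:-1, 1:] * h"
    using ss_bezout[OF p(1,2)] by blast
  obtain k where k: "[:-1, 1:] * h = p * k" using d by blast
  have eh: "pma ([:-1, 1:] * h) g v = 0" for v
  proof -
    have kk: "[:-1, 1:] * h = k * p" using k by (simp add: mult.commute)
    have "pma ([:-1, 1:] * h) g v = pma (k * p) g v" by (simp only: kk)
    also have "\<dots> = 0" by (simp add: pma_mult p(3) pma_vzero)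
    finally show ?thesis .
  qed
  fix v :: "'a^'n"
  let ?c = "pma (b * h) g v"
  let ?w = "pma a g v"
  have "v = pma (a * [:-1, 1:] + b * h) g v" by (simp only: abh pma_one)
  also have "\<dots> = pma ([:-1, 1:] * a) g v + ?c"
    by (simp only: pma_add mult.commute[of a "[:-1, 1:]"])
  also have "pma ([:-1, 1:] * a) g v = g *v ?w - ?w" by (simp only: pma_mult pma_lin)
  also have "(g *v ?w - ?w) + ?c = ?c + (g *v ?w - ?w)" by (rule add.commute)
  finally have v: "v = ?c + (g *v ?w - ?w)" .
  have "g *v ?c - ?c = pma [:-1, 1:] g ?c" by (simp add: pma_lin)
  also have "\<dots> = pma ([:-1, 1:] * (b * h)) g v" by (simp only: pma_mult)
  also have "[:-1, 1:] * (b * h) = ([:-1, 1:] * h) * b" by (simp only: ac_simps)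
  also have "pma (([:-1, 1:] * h) * b) g v = pma ([:-1, 1:] * h) g (pma b g v)" by (simp only: pma_mult)
  finally have "g *v ?c - ?c = pma ([:-1, 1:] * h) g (pma b g v)" .
  then have "g *v ?c = ?c" using eh by simp
  then show "\<exists>c w. v = c + (g *v w - w) \<and> g *v c = c" using v by blast
next
  obtain p where p: "p \<noteq> 0" "squarefree p" "\<And>v. pma p g v = 0"
    using ss unfolding semisimple_def by blast
  obtain a b h where abh: "a * [:-1, 1:] + b * h = 1" and d: "p dvd [:-1, 1:] * h"
    using ss_bezout[OF p(1,2)] by blast
  obtain k where k: "[:-1, 1:] * h = p * k" using d by blast
  have eh: "pma ([:-1, 1:] * h) g v = 0" for v
  proof -
    have kk: "[:-1, 1:] * h = k * p" using k by (simp add: mult.commute)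
    have "pma ([:-1, 1:] * h) g v = pma (k * p) g v" by (simp only: kk)
    also have "\<dots> = 0" by (simp add: pma_mult p(3) pma_vzero)
    finally show ?thesis .
  qed
  fix w :: "'a^'n"
  assume h0: "g *v (g *v w - w) - (g *v w - w) = 0"
  let ?y = "g *v w - w"
  have y0: "pma [:-1, 1:] g ?y = 0" using h0 by (simp add: pma_lin)
  have "?y = pma [:-1, 1:] g w" by (simp add: pma_lin)
  then have "pma h g ?y = pma (h * [:-1, 1:]) g w" by (simp only: pma_mult)
  also have "\<dots> = pma ([:-1, 1:] * h) g w" by (simp only: mult.commute)
  finally have hy: "pma h g ?y = 0" using eh[of w] by simp
  have "?y = pma (a * [:-1, 1:] + b * h) g ?y" by (simp only: abh pma_one)
  also have "\<dots> = 0" by (simp only: pma_add pma_mult y0 hy pma_vzero add_0)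
  finally show "?y = 0" .
qed

(* ---- from M ---- *)
theorem mainTheorem18:
  fixes Q :: "'a::{field,finite}^'n \<Rightarrow> 'a"
    and g :: "'a^'n^'n"
    and m :: nat
  assumes q_even: "even CARD('a)"
    and dimV: "CARD('n) = 2 * m + 1"
    and qf: "quadratic_form Q"
    and nonsing: "nonsingular_qf Q"
    and gG: "g \<in> isometry_group Q"
    and ss: "semisimple g"
    and fix2: "vec.dim (fixed_space g) \<ge> 2"
  shows "(\<exists>W. nondeg_hyperplane Q W \<and> plus_type Q W \<and> (\<lambda>v. g *v v) ` W = W) \<and>
         (\<exists>W. nondeg_hyperplane Q W \<and> minus_type Q W \<and> (\<lambda>v. g *v v) ` W = W)"
proof -
  have two: "(2::'a) = 0" using char2 q_even .
  interpret qfc Q by unfold_locales (rule qf, rule two)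
  have dU: "vec.dim (UNIV :: ('a^'n) set) = 2 * m + 1"
  proof -
    have "card (cart_basis :: ('a^'n) set) = CARD('n)" by (rule card_cart_basis)
    then show ?thesis using vec.dim_UNIV dimV by simp
  qed
  have rad_sub: "vec.subspace (radical Q)" unfolding radical_def vec.subspace_def by simp
  have rad_B: "B x v = 0" if "x \<in> radical Q" for x v using that unfolding radical_def by blast
  obtain r where r: "r \<in> radical Q" "r \<noteq> 0"
  proof (rule ccontr)
    assume "\<not> thesis"
    then have "radical Q \<subseteq> {0}" using that by blast
    then have "nondeg UNIV" unfolding nondeg_def radical_def by auto
    then have "even (vec.dim (UNIV :: ('a^'n) set))" using nondeg_even[of UNIV] by simp
    then show False using dU by simp
  qed
  have Qr: "Q r \<noteq> 0" using nonsing r unfolding nonsingular_qf_def by blast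
  have rad_r: "\<And>v. B r v = 0" using rad_B[OF r(1)] .
  have rad_span: "\<exists>lam. v = lam *s r" if v: "v \<in> radical Q" for v
  proof -
    obtain t where t: "t^2 = Q v / Q r" using sq_surj by blast
    have w: "v + t *s r \<in> radical Q" using v r(1) rad_sub
      by (simp add: vec.subspace_add vec.subspace_scale)
    have "Q (v + t *s r) = Q v + Q v" using t Qr rad_B[OF v] by simp
    then have "Q (v + t *s r) = 0" by simp
    then have "v + t *s r = 0" using nonsing w unfolding nonsingular_qf_def by blast
    then show ?thesis by auto
  qed
  (* the isometry *)
  have ginv: "invertible g" and Qg: "\<And>v. Q (g *v v) = Q v" using gG unfolding isometry_group_def by auto
  obtain h where gh: "g ** h = mat 1" "h ** g = mat 1" using ginv unfolding invertible_def by blast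
  have gsurj: "g *v (h *v v) = v" for v using gh(1) by (simp add: matrix_vector_mul_assoc)
  have ginj: "x = y" if "g *v x = g *v y" for x y
    using arg_cong[OF that, of "(*v) h"] gh(2) by (simp add: matrix_vector_mul_assoc)
  have Bg: "B (g *v x) (g *v y) = B x y" for x y
    unfolding polar_form_def by (simp add: matrix_vector_right_distrib[symmetric] Qg)
  have gr: "g *v r = r"
  proof -
    have "g *v r \<in> radical Q" unfolding radical_def
    proof (intro CollectI allI)
      fix v
      have "B (g *v r) v = B (g *v r) (g *v (h *v v))" by (simp add: gsurj)
      also have "\<dots> = 0" by (simp add: Bg rad_r)
      finally show "B (g *v r) v = 0" .
    qed
    then obtain lam where l: "g *v r = lam *s r" using rad_span by blast
    have "lam^2 * Q r = Q r" using Qg[of r] unfolding l by simp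
    then have "lam^2 = 1^2" using Qr by simp
    then have "lam = 1" by (rule sq_inj)
    then show ?thesis using l by simp
  qed
  (* C and D *)
  let ?C = "fixed_space g"
  have Cs: "vec.subspace ?C" unfolding fixed_space_def vec.subspace_def
    by (simp add: matrix_vector_right_distrib vec.scale)
  have orthCD: "B x (g *v w - w) = 0" if "x \<in> ?C" for x w
  proof -
    have gx: "g *v x = x" using that unfolding fixed_space_def by simp
    have "B x (g *v w) = B x w" using Bg[of x w] gx by simp
    then show ?thesis by simp
  qed
  note ss1 = ss_consequences(1)[OF ss] and ss2 = ss_consequences(2)[OF ss]
  have rD: "r \<noteq> g *v w - w" for w
  proof
    assume rw: "r = g *v w - w"
    have "g *v (g *v w - w) - (g *v w - w) = 0" unfolding rw[symmetric] gr by simp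
    then have "g *v w - w = 0" by (rule ss2)
    then show False using rw r(2) by simp
  qed
  (* u and c *)
  have "\<not> ?C \<subseteq> vec.span {r}"
  proof
    assume "?C \<subseteq> vec.span {r}"
    then have "vec.dim ?C \<le> vec.dim (vec.span {r})" by (rule vec.dim_subset)
    also have "\<dots> \<le> 1" using vec.dim_insert[of r "{}"] by simp
    finally show False using fix2 by simp
  qed
  then obtain u where u: "u \<in> ?C" "u \<notin> vec.span {r}" by blast
  have "u \<notin> radical Q"
  proof
    assume "u \<in> radical Q"
    then obtain lam where "u = lam *s r" using rad_span by blast
    then show False using u(2) by (simp add: vec.span_scale vec.span_base)
  qed
  then obtain v where v: "B u v \<noteq> 0" unfolding radical_def by blast
  obtain c0 w where cw: "v = c0 + (g *v w - w)" "g *v c0 = c0" using ss1 by blast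
  have c0C: "c0 \<in> ?C" using cw(2) unfolding fixed_space_def by simp
  have "B u v = B u c0" using orthCD[OF u(1), of w] unfolding cw(1) by simp
  then have uc0: "B u c0 \<noteq> 0" using v by simp
  define cc where "cc = inverse (B u c0) *s c0"
  have ccC: "cc \<in> ?C" unfolding cc_def using c0C Cs by (simp add: vec.subspace_scale)
  have ucc: "B u cc = 1" unfolding cc_def using uc0 by simp
  interpret qfs Q r u cc by unfold_locales (simp_all add: rad_r Qr ucc)
  (* R and Y0 *)
  let ?R = "ortho2 UNIV u cc"
  have Rs: "vec.subspace ?R" by (rule ortho2_subspace) simp
  have dR: "vec.dim (UNIV :: ('a^'n) set) = vec.dim ?R + 2"
    by (rule split_dim) (simp_all add: ucc)
  have Rdec: "UNIV = hsum u cc ?R" by (rule split_decomp) (simp_all add: ucc)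
  let ?D = "range (\<lambda>w. g *v w - w)"
  have Ds: "vec.subspace ?D" unfolding vec.subspace_def
  proof (intro conjI ballI allI)
    show "0 \<in> ?D" by (rule range_eqI[of _ _ 0]) simp
    fix x y assume "x \<in> ?D" "y \<in> ?D"
    then obtain wx wy where "x = g *v wx - wx" "y = g *v wy - wy" by blast
    then have "x + y = g *v (wx + wy) - (wx + wy)" by (simp add: matrix_vector_right_distrib algebra_simps)
    then show "x + y \<in> ?D" by blast
  next
    fix c x assume "x \<in> ?D"
    then obtain wx where "x = g *v wx - wx" by blast
    then have "c *s x = g *v (c *s wx) - c *s wx" by (simp add: vec.scale algebra_simps)
    then show "c *s x \<in> ?D" by blast
  qed
  have DR: "?D \<subseteq> ?R" unfolding ortho2_def
    using orthCD[OF u(1)] orthCD[OF ccC] by (auto simp: Bsym)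
  have rR: "r \<in> ?R" unfolding ortho2_def by simp
  have rnD: "r \<notin> ?D" using rD by blast
  obtain Bd where Bd: "Bd \<subseteq> ?D" "vec.independent Bd" "?D \<subseteq> vec.span Bd" "card Bd = vec.dim ?D"
    by (rule vec.basis_exists[of ?D])
  have spBd: "vec.span Bd \<subseteq> ?D" using Bd(1) Ds by (rule vec.span_minimal)
  have rBd: "r \<notin> vec.span Bd" using spBd rnD by blast
  have ind: "vec.independent (insert r Bd)"
    using rBd Bd(2) by (rule vec.independent_insertI)
  have sub: "insert r Bd \<subseteq> ?R" using Bd(1) DR rR by blast
  obtain BB where BB: "insert r Bd \<subseteq> BB" "BB \<subseteq> ?R" "vec.independent BB" "?R \<subseteq> vec.span BB"
    by (rule vec.maximal_independent_subset_extend[OF sub ind])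
  define Y0 where "Y0 = vec.span (BB - {r})"
  have Y0s: "vec.subspace Y0" unfolding Y0_def by simp
  have spY0: "vec.span Y0 = Y0" unfolding Y0_def by simp
  have rBd': "r \<notin> Bd"
  proof
    assume "r \<in> Bd"
    then have "r \<in> vec.span Bd" by (rule vec.span_base)
    then show False using rBd by simp
  qed
  have DY: "?D \<subseteq> Y0"
  proof -
    have "Bd \<subseteq> BB - {r}" using BB(1) rBd' by blast
    then have "vec.span Bd \<subseteq> Y0" unfolding Y0_def by (rule vec.span_mono)
    then show ?thesis using Bd(3) by blast
  qed
  have YR: "Y0 \<subseteq> ?R" unfolding Y0_def by (rule vec.span_minimal) (use BB(2) Rs in auto)
  have rY: "r \<notin> Y0"
  proof -
    have "r \<in> BB" using BB(1) by blast
    then show ?thesis using BB(3) unfolding Y0_def vec.dependent_def by blast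
  qed
  have RY: "?R \<subseteq> vec.span (insert r Y0)"
  proof -
    have "BB \<subseteq> insert r Y0"
    proof
      fix x assume x: "x \<in> BB"
      show "x \<in> insert r Y0"
      proof (cases "x = r")
        case False
        then have "x \<in> BB - {r}" using x by simp
        then have "x \<in> Y0" unfolding Y0_def by (rule vec.span_base)
        then show ?thesis by simp
      qed simp
    qed
    then have "vec.span BB \<subseteq> vec.span (insert r Y0)" by (rule vec.span_mono)
    then show ?thesis using BB(4) by blast
  qed
  have RY2: "vec.span (insert r Y0) \<subseteq> ?R" by (rule vec.span_minimal) (use YR rR Rs in auto)
  have dR2: "vec.dim ?R = vec.dim Y0 + 1"
  proof -
    have "?R = vec.span (insert r Y0)" using RY RY2 by blast
    then have "vec.dim ?R = vec.dim (insert r Y0)" by simp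
    also have "\<dots> = vec.dim Y0 + 1"
    proof -
      have rsp: "r \<notin> vec.span Y0" unfolding spY0 by (rule rY)
      then show ?thesis by (simp add: vec.dim_insert)
    qed
    finally show ?thesis .
  qed
  have m1: "m \<ge> 1" using dU dR dR2 by simp
  have dY0: "vec.dim Y0 = 2 * (m - 1)" using dU dR dR2 m1 by simp
  have Yo: "\<forall>y\<in>Y0. B y u = 0 \<and> B y cc = 0" using YR unfolding ortho2_def by blast
  have decomp: "\<exists>\<alpha> \<beta> k y. v = \<alpha> *s u + \<beta> *s cc + k *s r + y \<and> y \<in> Y0" for v
  proof -
    have "v \<in> hsum u cc ?R" using Rdec by blast
    then obtain \<alpha> \<beta> x where x: "v = \<alpha> *s u + \<beta> *s cc + x" "x \<in> ?R" unfolding hsum_def by blast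
    then have "x \<in> vec.span (insert r Y0)" using RY by blast
    then obtain k where "x - k *s r \<in> Y0" unfolding vec.span_insert spY0 by blast
    then have "x + k *s r \<in> Y0" by simp
    moreover have "v = \<alpha> *s u + \<beta> *s cc + k *s r + (x + k *s r)" using x(1) by (simp add: algebra_simps)
    ultimately show ?thesis by blast
  qed
  have Y0nd: "nondeg Y0" unfolding nondeg_def
  proof (intro ballI impI)
    fix y assume y: "y \<in> Y0" and hy: "\<forall>z\<in>Y0. B y z = 0"
    have "B y v = 0" for v
    proof -
      obtain \<alpha> \<beta> k z where "v = \<alpha> *s u + \<beta> *s cc + k *s r + z" "z \<in> Y0" using decomp by blast
      moreover have "B y u = 0" "B y cc = 0" using Yo y by auto
      ultimately show ?thesis using hy by simp
    qed
    then have "y \<in> radical Q" unfolding radical_def by simp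
    then obtain lam where l: "y = lam *s r" using rad_span by blast
    show "y = 0"
    proof (rule ccontr)
      assume "y \<noteq> 0"
      then have "lam \<noteq> 0" using l by simp
      then have "r = inverse lam *s y" using l by simp
      then have "r \<in> Y0" using y Y0s by (simp add: vec.subspace_scale)
      then show False using rY by simp
    qed
  qed
  have KK: "(\<exists>a b. witt_index Q (hsum (u + a *s r) (cc + b *s r) Y0) = (m - 1) + 1) \<and>
            (\<exists>a b. witt_index Q (hsum (u + a *s r) (cc + b *s r) Y0) = m - 1)"
    by (rule K[OF Y0s Y0nd dY0 Yo])
  (* properties of any W *)
  have Wprops: "nondeg_hyperplane Q W \<and> vec.dim W = 2 * m \<and> (\<lambda>v. g *v v) ` W = W"
    if W: "W = hsum (u + a *s r) (cc + b *s r) Y0" for W a b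
  proof -
    have p12: "B (u + a *s r) (cc + b *s r) = 1" by (simp add: ucc)
    have orthW: "\<And>x. x \<in> Y0 \<Longrightarrow> B x (u + a *s r) = 0 \<and> B x (cc + b *s r) = 0"
      using Yo by simp
    have Ws: "vec.subspace W" unfolding W by (rule hsum_dim(2)[OF Y0s p12 orthW])
    have "vec.dim W = vec.dim Y0 + 2" unfolding W by (rule hsum_dim(1)[OF Y0s p12 orthW])
    then have dW: "vec.dim W = 2 * m" using dY0 m1 by simp
    have Y0W: "Y0 \<subseteq> W"
    proof
      fix y assume "y \<in> Y0"
      then have "y = 0 *s (u + a *s r) + 0 *s (cc + b *s r) + y \<and> y \<in> Y0" by simp
      then show "y \<in> W" unfolding W hsum_def by blast
    qed
    have int: "W \<inter> radical Q = {0}"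
    proof (intro equalityI subsetI)
      fix x assume x: "x \<in> W \<inter> radical Q"
      then obtain \<alpha> \<beta> y where xy: "x = \<alpha> *s (u + a *s r) + \<beta> *s (cc + b *s r) + y" "y \<in> Y0"
        unfolding W hsum_def by blast
      have "B x cc = \<alpha>" using Yo xy(2) ucc unfolding xy(1) by simp
      then have a0: "\<alpha> = 0" using rad_B x by simp
      have "B x u = \<beta>" using Yo xy(2) ucc unfolding xy(1) by (simp add: Bsym[of cc u])
      then have b0: "\<beta> = 0" using rad_B x by simp
      have "x = y" using xy(1) a0 b0 by simp
      then have "x \<in> Y0" "x \<in> radical Q" using xy(2) x by auto
      then obtain lam where l: "x = lam *s r" using rad_span by blast
      show "x \<in> {0}"
      proof (rule ccontr)
        assume "x \<notin> {0}"
        then have "lam \<noteq> 0" using l by auto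
        then have "r = inverse lam *s x" using l by simp
        then have "r \<in> Y0" using \<open>x \<in> Y0\<close> Y0s by (simp add: vec.subspace_scale)
        then show False using rY by simp
      qed
    next
      fix x assume "x \<in> {0::'a^'n}"
      then show "x \<in> W \<inter> radical Q" using Ws rad_sub by (simp add: vec.subspace_0)
    qed
    have sumU: "{w + r' | w r'. w \<in> W \<and> r' \<in> radical Q} = UNIV"
    proof (intro set_eqI iffI)
      fix v :: "'a^'n"
      obtain \<alpha> \<beta> k y where v: "v = \<alpha> *s u + \<beta> *s cc + k *s r + y" "y \<in> Y0" using decomp by blast
      let ?w = "\<alpha> *s (u + a *s r) + \<beta> *s (cc + b *s r) + y"
      let ?r = "(\<alpha> * a + \<beta> * b + k) *s r"
      have "?w \<in> W" unfolding W hsum_def using v(2) by blast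
      moreover have "?r \<in> radical Q" by (rule vec.subspace_scale[OF rad_sub r(1)])
      moreover have "v = ?w + ?r" unfolding v(1) by (simp add: algebra_simps vec_eq_iff)
      ultimately show "v \<in> {w + r' | w r'. w \<in> W \<and> r' \<in> radical Q}" by blast
    qed simp
    have gW: "(\<lambda>v. g *v v) ` W \<subseteq> W"
    proof
      fix x assume "x \<in> (\<lambda>v. g *v v) ` W"
      then obtain w where w: "w \<in> W" "x = g *v w" by blast
      have "g *v w - w \<in> W" using DY Y0W by blast
      then have "w + (g *v w - w) \<in> W" by (rule vec.subspace_add[OF Ws w(1)])
      moreover have "w + (g *v w - w) = x" using w(2) by simp
      ultimately show "x \<in> W" by simp
    qed
    have "card ((\<lambda>v. g *v v) ` W) = card W"
      by (rule card_image) (auto intro: inj_onI ginj)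
    then have "(\<lambda>v. g *v v) ` W = W" using gW by (simp add: card_subset_eq)
    then show ?thesis using Ws int sumU dW unfolding nondeg_hyperplane_def by blast
  qed
  obtain a b where ab: "witt_index Q (hsum (u + a *s r) (cc + b *s r) Y0) = m"
    using KK m1 by auto
  obtain a' b' where ab': "witt_index Q (hsum (u + a' *s r) (cc + b' *s r) Y0) = m - 1"
    using KK by blast
  have P: "\<exists>W. nondeg_hyperplane Q W \<and> plus_type Q W \<and> (\<lambda>v. g *v v) ` W = W"
    using Wprops[OF refl, of a b] ab unfolding plus_type_def by auto
  have Mi: "\<exists>W. nondeg_hyperplane Q W \<and> minus_type Q W \<and> (\<lambda>v. g *v v) ` W = W"
    using Wprops[OF refl, of a' b'] ab' m1 unfolding minus_type_def by (intro exI) auto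
  show ?thesis using P Mi by blast
qed

end
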